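(* Let $G$ be a graph on $n$ vertices with at least one edge. Then \[ \lambda(G)\le \frac{-|E(G)|}{\binom{\chi(G)}{2}\,\theta(G)}. \]
   Context: All graphs are finite and simple; $\lambda(G)$ denotes the smallest eigenvalue of the adjacency matrix of $G$. $\chi(G)$ is the chromatic number and $\alpha(G)$ the independence number of $G$. For a graph $G$ on $n$ vertices, $\theta(G)=\min\{n/2,\ \alpha(G)\}$. *)

theory Defs
  imports "HOL-Analysis.Analysis"
begin

text \<open>A finite simple graph is represented by a finite vertex type 'n (vertex set UNIV,
  n = CARD('n)) and a symmetric irreflexive adjacency relation E.\<close>

definition simple_graph :: "('n::finite \<Rightarrow> 'n \<Rightarrow> bool) \<Rightarrow> bool" where
  "simple_graph E \<longleftrightarrow> (\<forall>u v. E u v \<longrightarrow> E v u) \<and> (\<forall>u. \<not> E u u)"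

definition edges :: "('n::finite \<Rightarrow> 'n \<Rightarrow> bool) \<Rightarrow> 'n set set" where
  "edges E = {{u, v} | u v. E u v}"

definition adj_matrix :: "('n::finite \<Rightarrow> 'n \<Rightarrow> bool) \<Rightarrow> real^'n^'n" where
  "adj_matrix E = (\<chi> i j. if E i j then 1 else 0)"

definition eigenvalues :: "real^'n^'n \<Rightarrow> real set" where
  "eigenvalues A = {l. \<exists>v. v \<noteq> 0 \<and> A *v v = l *\<^sub>R v}"

definition min_eigenvalue :: "real^'n^'n \<Rightarrow> real" where
  "min_eigenvalue A = Min (eigenvalues A)"

definition proper_colouring :: "('n::finite \<Rightarrow> 'n \<Rightarrow> bool) \<Rightarrow> nat \<Rightarrow> ('n \<Rightarrow> nat) \<Rightarrow> bool" where
  "proper_colouring E k c \<longleftrightarrow> (\<forall>u. c u < k) \<and> (\<forall>u v. E u v \<longrightarrow> c u \<noteq> c v)"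

definition chromatic_number :: "('n::finite \<Rightarrow> 'n \<Rightarrow> bool) \<Rightarrow> nat" where
  "chromatic_number E = (LEAST k. \<exists>c. proper_colouring E k c)"

definition independent_set :: "('n::finite \<Rightarrow> 'n \<Rightarrow> bool) \<Rightarrow> 'n set \<Rightarrow> bool" where
  "independent_set E S \<longleftrightarrow> (\<forall>u\<in>S. \<forall>v\<in>S. \<not> E u v)"

definition independence_number :: "('n::finite \<Rightarrow> 'n \<Rightarrow> bool) \<Rightarrow> nat" where
  "independence_number E = Max (card ` {S. independent_set E S})"

definition theta :: "('n::finite \<Rightarrow> 'n \<Rightarrow> bool) \<Rightarrow> real" where
  "theta E = min (real CARD('n) / 2) (real (independence_number E))"

end

theory Submission imports Defs begin

definition qf :: "real^'n^'n \<Rightarrow> real^'n \<Rightarrow> real^'n \<Rightarrow> real" where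
  "qf A x y = x \<bullet> (A *v y)"

lemma qf_sum: "qf A x y = (\<Sum>i\<in>UNIV. \<Sum>j\<in>UNIV. A$i$j * x$i * y$j)"
  by (simp add: qf_def inner_vec_def matrix_vector_mult_def sum_distrib_left mult_ac)

lemma qf_sym:
  assumes "\<forall>i j. A$i$j = A$j$i"
  shows "qf A x y = qf A y x"
  unfolding qf_sum using assms
  by (subst sum.swap) (simp add: mult_ac)

lemma qf_cont: "continuous_on S (\<lambda>x. qf A x x)"
  unfolding qf_sum by (intro continuous_intros)

lemma qf_scale: "qf A (c *\<^sub>R x) (c *\<^sub>R x) = c^2 * qf A x x"
  by (simp add: qf_def matrix_vector_mult_scaleR power2_eq_square)

lemma sym_eig_finite:
  fixes A :: "real^'n^'n"
  assumes sym: "\<forall>i j. A$i$j = A$j$i"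
  shows "finite (eigenvalues A)"
proof -
  define f where "f l = (SOME v. v \<noteq> 0 \<and> A *v v = l *\<^sub>R v)" for l
  have f: "f l \<noteq> 0 \<and> A *v f l = l *\<^sub>R f l" if "l \<in> eigenvalues A" for l
    using that unfolding f_def eigenvalues_def by (metis (mono_tags, lifting) mem_Collect_eq someI_ex)
  have orth: "f l1 \<bullet> f l2 = 0" if "l1 \<in> eigenvalues A" "l2 \<in> eigenvalues A" "l1 \<noteq> l2" for l1 l2
  proof -
    have "qf A (f l1) (f l2) = l2 * (f l1 \<bullet> f l2)" using f[OF that(2)] by (simp add: qf_def)
    moreover have "qf A (f l2) (f l1) = l1 * (f l1 \<bullet> f l2)" using f[OF that(1)] by (simp add: qf_def inner_commute)
    ultimately show ?thesis using qf_sym[OF sym, of "f l1" "f l2"] that(3) by auto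
  qed
  have inj: "inj_on f (eigenvalues A)"
    by (metis f inj_onI inner_eq_zero_iff orth)
  have "pairwise orthogonal (f ` eigenvalues A)"
    unfolding pairwise_def orthogonal_def using orth by auto
  moreover have "0 \<notin> f ` eigenvalues A" using f by auto
  ultimately have "independent (f ` eigenvalues A)" by (rule pairwise_orthogonal_independent)
  hence "finite (f ` eigenvalues A)" by (rule independent_imp_finite)
  thus ?thesis using inj finite_imageD by blast
qed

lemma rayleigh:
  fixes A :: "real^'n^'n"
  assumes sym: "\<forall>i j. A$i$j = A$j$i" and x0: "x \<noteq> 0"
  shows "min_eigenvalue A \<le> qf A x x / (x \<bullet> x)"
proof -
  have ne: "sphere (0::real^'n) 1 \<noteq> {}" by (metis empty_iff mem_sphere_0 norm_axis_1)
  obtain v where v: "v \<in> sphere 0 1" and vmin: "\<And>y. y \<in> sphere 0 1 \<Longrightarrow> qf A v v \<le> qf A y y"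
    using continuous_attains_inf[OF compact_sphere _ qf_cont, of "0::real^'n" 1 A]
    using ne by blast
  define \<mu> where "\<mu> = qf A v v"
  have vv: "v \<bullet> v = 1" using v by (simp add: norm_eq_1)
  have ge: "qf A y y \<ge> \<mu> * (y \<bullet> y)" for y
  proof (cases "y = 0")
    case True thus ?thesis by (simp add: qf_def)
  next
    case False
    define z where "z = (1 / norm y) *\<^sub>R y"
    have "z \<in> sphere 0 1" using False by (simp add: z_def)
    hence "\<mu> \<le> qf A z z" using vmin \<mu>_def by auto
    also have "\<dots> = qf A y y / (norm y)^2" unfolding z_def qf_scale by (simp add: power_divide)
    finally show ?thesis using False by (simp add: field_simps power2_norm_eq_inner)
  qed
  define w where "w = A *v v - \<mu> *\<^sub>R v"
  have key: "qf A (v + t *\<^sub>R w) (v + t *\<^sub>R w) - \<mu> * ((v + t *\<^sub>R w) \<bullet> (v + t *\<^sub>R w))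
      = 2 * t * (w \<bullet> w) + t^2 * (qf A w w - \<mu> * (w \<bullet> w))" for t
  proof -
    have s: "qf A v w = qf A w v" using qf_sym[OF sym] by simp
    have "qf A w v - \<mu> * (w \<bullet> v) = w \<bullet> w" by (simp add: w_def qf_def inner_diff_right)
    thus ?thesis using s \<mu>_def vv
      by (simp add: qf_def algebra_simps inner_add_left inner_add_right power2_eq_square inner_commute)
  qed
  have w0: "w = 0"
  proof (rule ccontr)
    assume "w \<noteq> 0"
    hence ww: "w \<bullet> w > 0" by simp
    define c where "c = qf A w w - \<mu> * (w \<bullet> w)"
    have c0: "c \<ge> 0" using ge[of w] c_def by simp
    define t where "t = - (w \<bullet> w) / (c + 1)"
    have "0 \<le> 2 * t * (w \<bullet> w) + t^2 * c" using key[of t] ge[of "v + t *\<^sub>R w"] c_def by simp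
    moreover have "2 * t * (w \<bullet> w) + t^2 * c < 0"
    proof -
      have "t^2 * c = (w \<bullet> w)^2 * c / (c+1)^2" unfolding t_def by (simp add: power_divide)
      also have "\<dots> = ((w \<bullet> w)^2 / (c+1)) * (c / (c+1))" by (simp add: power2_eq_square)
      also have "\<dots> \<le> ((w \<bullet> w)^2 / (c+1)) * 1"
        using c0 by (intro mult_left_mono) auto
      also have "\<dots> = (w \<bullet> w)^2 / (c+1)" by simp
      finally have "t^2 * c \<le> (w \<bullet> w)^2 / (c+1)" .
      moreover have "2 * t * (w \<bullet> w) = - 2 * (w \<bullet> w)^2 / (c+1)" unfolding t_def by (simp add: power2_eq_square)
      moreover have "(w \<bullet> w)^2 / (c+1) > 0" using ww c0 by simp
      ultimately show ?thesis by linarith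
    qed
    ultimately show False by linarith
  qed
  hence "\<mu> \<in> eigenvalues A" using v unfolding eigenvalues_def w_def by (intro CollectI exI[of _ v]) auto
  hence "min_eigenvalue A \<le> \<mu>" unfolding min_eigenvalue_def using sym_eig_finite[OF sym] by simp
  also have "\<mu> \<le> qf A x x / (x \<bullet> x)" using ge[of x] x0 by (simp add: field_simps)
  finally show ?thesis .
qed


lemma sum_if_card: "finite A \<Longrightarrow> (\<Sum>x\<in>A. if P x then (1::real) else 0) = real (card {x\<in>A. P x})"
  by (simp add: sum.inter_filter[symmetric])

lemma card_pairs: "card {(i,j). i < j \<and> j < (k::nat)} = k choose 2"
proof (induction k)
  case 0 thus ?case by simp
next
  case (Suc k)
  have eq: "{(i,j). i < j \<and> j < Suc k} = {(i,j). i < j \<and> j < k} \<union> (\<lambda>i. (i,k)) ` {..<k}"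
    by auto
  have fin: "finite {(i,j). i < j \<and> j < (k::nat)}"
    by (rule finite_subset[of _ "{..<k} \<times> {..<k}"]) auto
  have "card {(i,j). i < j \<and> j < Suc k} = card {(i,j). i < j \<and> j < k} + card ((\<lambda>i. (i,k)) ` {..<k})"
    unfolding eq by (rule card_Un_disjoint) (use fin in auto)
  also have "card ((\<lambda>i. (i,k)) ` {..<k}) = k" by (subst card_image) (auto simp: inj_on_def)
  finally show ?case using Suc by (simp add: numeral_2_eq_2)
qed

theorem theorem2p8:
  fixes E :: "'n::finite \<Rightarrow> 'n \<Rightarrow> bool"
  assumes "simple_graph E"
    and "\<exists>u v. E u v"
  shows "min_eigenvalue (adj_matrix E)
           \<le> - real (card (edges E))
               / (real (chromatic_number E choose 2) * theta E)"
proof -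
  have symE: "\<And>u v. E u v \<Longrightarrow> E v u" and irr: "\<And>u. \<not> E u u"
    using assms(1) unfolding simple_graph_def by auto
  obtain u0 v0 where e0: "E u0 v0" using assms(2) by auto
  define k where "k = chromatic_number E"
  have exc: "\<exists>c. proper_colouring E CARD('n) c"
  proof -
    obtain f where f: "bij_betw f (UNIV::'n set) {0..<card (UNIV::'n set)}"
      using ex_bij_betw_finite_nat[of "UNIV::'n set"] finite by blast
    have "proper_colouring E CARD('n) f"
      unfolding proper_colouring_def using f irr
      by (auto simp: bij_betw_def inj_on_def)
    thus ?thesis by blast
  qed
  obtain c where c: "proper_colouring E k c"
    unfolding k_def chromatic_number_def using LeastI_ex[of "\<lambda>k. \<exists>c. proper_colouring E k c"] exc by blast
  have cl: "\<And>u. c u < k" and cp: "\<And>u v. E u v \<Longrightarrow> c u \<noteq> c v"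
    using c unfolding proper_colouring_def by auto
  define P where "P = {(i,j). i < j \<and> j < (k::nat)}"
  have finP: "finite P" unfolding P_def
    by (rule finite_subset[of _ "{..<k} \<times> {..<k}"]) auto
  have cardP: "card P = k choose 2" unfolding P_def by (rule card_pairs)
  define T where "T p = {(u,v). E u v \<and> c u = fst p \<and> c v = snd p}" for p
  define D where "D p = card (T p)" for p
  define S where "S = {(u,v). E u v \<and> c u < c v}"
  have SU: "S = (\<Union>p\<in>P. T p)"
    unfolding S_def T_def P_def using cl by auto
  have "edges E \<subseteq> (\<lambda>(u,v). {u,v}) ` S"
  proof
    fix e assume "e \<in> edges E"
    then obtain u v where e: "e = {u,v}" "E u v" unfolding edges_def by auto
    show "e \<in> (\<lambda>(u,v). {u,v}) ` S"
    proof (cases "c u < c v")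
      case True thus ?thesis using e unfolding S_def by auto
    next
      case False
      hence "c v < c u" using cp[OF e(2)] by auto
      hence "(v,u) \<in> S" using symE[OF e(2)] unfolding S_def by auto
      thus ?thesis using e by (auto intro!: image_eqI[of _ _ "(v,u)"])
    qed
  qed
  hence "card (edges E) \<le> card ((\<lambda>(u,v). {u,v}) ` S)" by (intro card_mono) auto
  also have "\<dots> \<le> card S" by (rule card_image_le) simp
  also have "card S = (\<Sum>p\<in>P. D p)" unfolding SU D_def
    by (rule card_UN_disjoint) (use finP in \<open>auto simp: T_def\<close>)
  finally have mle: "card (edges E) \<le> (\<Sum>p\<in>P. D p)" .
  have k2: "k \<ge> 2" using cl[of u0] cl[of v0] cp[OF e0] by linarith
  have Pne: "P \<noteq> {}" proof -
    have "(0,1) \<in> P" unfolding P_def using k2 by auto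
    thus ?thesis by auto
  qed
  have Cpos: "card P > 0" using finP Pne by (simp add: card_gt_0_iff)
  have m1: "card (edges E) \<ge> 1"
  proof -
    have "{u0,v0} \<in> edges E" unfolding edges_def using e0 by auto
    moreover have "finite (edges E)" by simp
    ultimately show ?thesis by (metis One_nat_def Suc_leI card_gt_0_iff empty_iff)
  qed
  obtain p where pP: "p \<in> P" and pD: "real (card (edges E)) / real (card P) \<le> real (D p)"
  proof (rule ccontr)
    assume "\<not> thesis"
    hence lt: "\<forall>p\<in>P. real (D p) < real (card (edges E)) / real (card P)" using that by force
    have "(\<Sum>p\<in>P. real (D p)) < (\<Sum>p\<in>P. real (card (edges E)) / real (card P))"
      by (rule sum_strict_mono[OF finP Pne]) (use lt in auto)
    also have "\<dots> = real (card (edges E))" using Cpos by simp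
    moreover have "real (card (edges E)) \<le> (\<Sum>p\<in>P. real (D p))"
      using mle by (metis of_nat_le_iff of_nat_sum)
    ultimately show False by linarith
  qed
  obtain i j where pij: "p = (i,j)" "i < j" "j < k" using pP unfolding P_def by auto
  have Dpos: "real (D p) > 0"
  proof -
    have "real (card (edges E)) / real (card P) > 0" using m1 Cpos by simp
    thus ?thesis using pD by linarith
  qed
  hence "T p \<noteq> {}" unfolding D_def by auto
  then obtain q where "q \<in> T p" by blast
  then obtain u1 v1 where uv1: "(u1,v1) \<in> T p" by (cases q) auto
  define x :: "real^'n" where "x = (\<chi> u. if c u = i then 1 else if c u = j then -1 else 0)"
  have x0: "x \<noteq> 0"
  proof
    assume "x = 0"
    hence "x $ u1 = 0" by simp
    moreover have "c u1 = i" using uv1 pij unfolding T_def by auto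
    ultimately show False unfolding x_def by simp
  qed
  define T' where "T' = {(u,v). E u v \<and> c u = j \<and> c v = i}"
  have T'eq: "T' = prod.swap ` T p"
  proof (rule set_eqI)
    fix q :: "'n \<times> 'n"
    obtain a b where q: "q = (a,b)" by (cases q)
    have "q \<in> prod.swap ` T p \<longleftrightarrow> (b,a) \<in> T p" unfolding q
      by (metis image_eqI swap_simp swap_swap imageE)
    also have "\<dots> \<longleftrightarrow> E b a \<and> c b = i \<and> c a = j" unfolding T_def pij by simp
    also have "\<dots> \<longleftrightarrow> q \<in> T'" unfolding T'_def q using symE by blast
    finally show "q \<in> T' \<longleftrightarrow> q \<in> prod.swap ` T p" by simp
  qed
  have cT': "card T' = D p" unfolding T'eq D_def by (rule card_image) simp
  have qfx: "qf (adj_matrix E) x x = - 2 * real (D p)"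
  proof -
    have "qf (adj_matrix E) x x = (\<Sum>u\<in>UNIV. \<Sum>v\<in>UNIV. (if E u v then 1 else 0) * x$u * x$v)"
      unfolding qf_sum adj_matrix_def by simp
    also have "\<dots> = (\<Sum>(u,v)\<in>UNIV \<times> UNIV. (if E u v then 1 else 0) * x$u * x$v)"
      by (rule sum.cartesian_product)
    also have "\<dots> = (\<Sum>q\<in>UNIV. - ((if q \<in> T p then 1 else 0) + (if q \<in> T' then 1 else 0)))"
      unfolding UNIV_Times_UNIV
    proof (rule sum.cong[OF refl], clarify)
      fix u v
      show "(if E u v then 1 else 0) * x$u * x$v = - ((if (u,v) \<in> T p then 1 else 0) + (if (u,v) \<in> T' then 1 else 0))"
        using cp[of u v] pij unfolding x_def T_def T'_def by auto
    qed
    also have "\<dots> = - (real (card (T p)) + real (card T'))"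
    proof -
      have h1: "(\<Sum>q\<in>UNIV. if q \<in> T p then (1::real) else 0) = real (card (T p))"
        using sum_if_card[of UNIV "\<lambda>q. q \<in> T p"] by simp
      have h2: "(\<Sum>q\<in>UNIV. if q \<in> T' then (1::real) else 0) = real (card T')"
        using sum_if_card[of UNIV "\<lambda>q. q \<in> T'"] by simp
      show ?thesis unfolding sum_negf sum.distrib h1 h2 ..
    qed
    finally show ?thesis using cT' D_def by simp
  qed
  define s where "s = card {u. c u = i} + card {u. c u = j}"
  have xx: "x \<bullet> x = real s"
  proof -
    have "x \<bullet> x = (\<Sum>u\<in>UNIV. if c u = i \<or> c u = j then 1 else 0)"
      unfolding inner_vec_def x_def using pij by (intro sum.cong) auto
    also have "\<dots> = real (card {u. c u = i \<or> c u = j})" by (simp add: sum_if_card)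
    also have "{u. c u = i \<or> c u = j} = {u. c u = i} \<union> {u. c u = j}" by auto
    also have "card \<dots> = s" unfolding s_def by (rule card_Un_disjoint) (use pij in auto)
    finally show ?thesis .
  qed
  have sn: "s \<le> CARD('n)"
  proof -
    have "s = card ({u. c u = i} \<union> {u. c u = j})" unfolding s_def
      by (rule card_Un_disjoint[symmetric]) (use pij in auto)
    also have "\<dots> \<le> CARD('n)" by (rule card_mono) auto
    finally show ?thesis .
  qed
  define \<alpha> where "\<alpha> = independence_number E"
  have finI: "finite (card ` {S. independent_set E S})" by simp
  have cla: "card {u. c u = l} \<le> \<alpha>" for l
  proof -
    have "independent_set E {u. c u = l}" unfolding independent_set_def using cp by blast
    hence "card {u. c u = l} \<in> card ` {S. independent_set E S}" by blast
    thus ?thesis unfolding \<alpha>_def independence_number_def using finI by (intro Max_ge)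
  qed
  have a1: "\<alpha> \<ge> 1"
  proof -
    have "independent_set E {u0}" unfolding independent_set_def using irr by auto
    hence "card {u0} \<in> card ` {S. independent_set E S}" by blast
    hence "card {u0} \<le> \<alpha>" unfolding \<alpha>_def independence_number_def using finI by (intro Max_ge)
    thus ?thesis by simp
  qed
  have s2a: "s \<le> 2 * \<alpha>" unfolding s_def using cla[of i] cla[of j] by simp
  have th: "theta E = min (real CARD('n) / 2) (real \<alpha>)" unfolding theta_def \<alpha>_def by simp
  have thpos: "theta E > 0" unfolding th using a1 by simp
  have s2th: "real s \<le> 2 * theta E" unfolding th using sn s2a by simp
  have spos: "real s > 0" using xx x0 by (metis inner_gt_zero_iff)
  have symA: "\<forall>a b. adj_matrix E $ a $ b = adj_matrix E $ b $ a"
  proof (intro allI)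
    fix a b
    have "E a b \<longleftrightarrow> E b a" using symE by blast
    thus "adj_matrix E $ a $ b = adj_matrix E $ b $ a" unfolding adj_matrix_def by simp
  qed
  have "min_eigenvalue (adj_matrix E) \<le> qf (adj_matrix E) x x / (x \<bullet> x)"
    by (rule rayleigh[OF symA x0])
  also have "\<dots> = - (2 * real (D p)) / real s" unfolding qfx xx by simp
  also have "\<dots> \<le> - (2 * real (D p)) / (2 * theta E)"
    using spos s2th Dpos by (intro divide_left_mono_neg) auto
  also have "\<dots> = - real (D p) / theta E" by simp
  also have "\<dots> \<le> - (real (card (edges E)) / real (card P)) / theta E"
    using pD thpos by (intro divide_right_mono) auto
  also have "\<dots> = - real (card (edges E)) / (real (chromatic_number E choose 2) * theta E)"
    unfolding cardP k_def by simp
  finally show ?thesis .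
qed

end
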